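(* Let $X$ be a graph with signless Laplacian $Q=\sum_{\lambda}\lambda E_\lambda$ and let $A_{\mathcal L}=\sum_\theta\theta F_\theta$ be the adjacency matrix of its line graph (spectral decompositions with orthogonal projections). Let $\{a,b\},\{\alpha,\beta\}\in E(X)$. For every eigenvalue $\lambda\neq0$ of $Q$, $\lambda-2$ is an eigenvalue of $A_{\mathcal L}$, and for each fixed sign $\pm$, $$F_{\lambda-2}\mathbf f_{ab}=\pm F_{\lambda-2}\mathbf f_{\alpha\beta}\iff E_\lambda(\mathbf e_a+\mathbf e_b)=\pm E_\lambda(\mathbf e_\alpha+\mathbf e_\beta).$$
   Context: The line graph $\mathcal L(X)$ has vertex set $E(X)$ with edges adjacent iff they share an endpoint; $\mathbf f_{ab}$ is the standard basis vector of the vertex of $\mathcal L(X)$ corresponding to edge $\{a,b\}$. $Q=D+A$. *)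

theory Defs
  imports Complex_Main
begin

definition simple_graph :: "'v set \<Rightarrow> 'v set set \<Rightarrow> bool" where
  "simple_graph V Ed \<longleftrightarrow> finite V \<and> (\<forall>e\<in>Ed. \<exists>x y. x \<in> V \<and> y \<in> V \<and> x \<noteq> y \<and> e = {x, y})"

definition vecs_on :: "'a set \<Rightarrow> ('a \<Rightarrow> real) set" where
  "vecs_on S = {f. \<forall>x. x \<notin> S \<longrightarrow> f x = 0}"

definition inner_on :: "'a set \<Rightarrow> ('a \<Rightarrow> real) \<Rightarrow> ('a \<Rightarrow> real) \<Rightarrow> real" where
  "inner_on S f g = (\<Sum>x\<in>S. f x * g x)"

definition mat_vec :: "'a set \<Rightarrow> ('a \<Rightarrow> 'a \<Rightarrow> real) \<Rightarrow> ('a \<Rightarrow> real) \<Rightarrow> ('a \<Rightarrow> real)" where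
  "mat_vec S M f = (\<lambda>i. if i \<in> S then (\<Sum>j\<in>S. M i j * f j) else 0)"

definition eigenspace_on :: "'a set \<Rightarrow> ('a \<Rightarrow> 'a \<Rightarrow> real) \<Rightarrow> real \<Rightarrow> ('a \<Rightarrow> real) set" where
  "eigenspace_on S M \<theta> = {f \<in> vecs_on S. mat_vec S M f = (\<lambda>i. \<theta> * f i)}"

definition is_eigenvalue_on :: "'a set \<Rightarrow> ('a \<Rightarrow> 'a \<Rightarrow> real) \<Rightarrow> real \<Rightarrow> bool" where
  "is_eigenvalue_on S M \<theta> \<longleftrightarrow> (\<exists>f \<in> eigenspace_on S M \<theta>. f \<noteq> (\<lambda>_. 0))"

definition orth_proj :: "'a set \<Rightarrow> ('a \<Rightarrow> real) set \<Rightarrow> ('a \<Rightarrow> real) \<Rightarrow> ('a \<Rightarrow> real)" where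
  "orth_proj S W v = (THE w. w \<in> W \<and> (\<forall>u\<in>W. inner_on S (\<lambda>i. v i - w i) u = 0))"

definition spectral_proj :: "'a set \<Rightarrow> ('a \<Rightarrow> 'a \<Rightarrow> real) \<Rightarrow> real \<Rightarrow> ('a \<Rightarrow> real) \<Rightarrow> ('a \<Rightarrow> real)" where
  "spectral_proj S M \<theta> = orth_proj S (eigenspace_on S M \<theta>)"

definition degree :: "'v set set \<Rightarrow> 'v \<Rightarrow> nat" where
  "degree Ed x = card {e \<in> Ed. x \<in> e}"

definition signless_laplacian :: "'v set set \<Rightarrow> 'v \<Rightarrow> 'v \<Rightarrow> real" where
  "signless_laplacian Ed i j =
     (if i = j then real (degree Ed i) else if {i, j} \<in> Ed then 1 else 0)"

definition line_adj :: "'v set set \<Rightarrow> 'v set \<Rightarrow> 'v set \<Rightarrow> real" where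
  "line_adj Ed e f = (if e \<noteq> f \<and> e \<inter> f \<noteq> {} then 1 else 0)"

definition std_basis :: "'a \<Rightarrow> 'a \<Rightarrow> real" where
  "std_basis x = (\<lambda>i. if i = x then 1 else 0)"

end

theory Submission imports Defs begin

definition subsp :: "'a set \<Rightarrow> ('a \<Rightarrow> real) set \<Rightarrow> bool" where
 "subsp S W \<longleftrightarrow> W \<subseteq> vecs_on S \<and> (\<lambda>_. 0) \<in> W \<and> (\<forall>f\<in>W. \<forall>g\<in>W. (\<lambda>i. f i + g i) \<in> W)
    \<and> (\<forall>c. \<forall>f\<in>W. (\<lambda>i. c * f i) \<in> W)"

lemma subsp_add: "subsp S W \<Longrightarrow> f \<in> W \<Longrightarrow> g \<in> W \<Longrightarrow> (\<lambda>i. f i + g i) \<in> W"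
  by (simp add: subsp_def)
lemma subsp_scale: "subsp S W \<Longrightarrow> f \<in> W \<Longrightarrow> (\<lambda>i. c * f i) \<in> W"
  by (simp add: subsp_def)
lemma subsp_diff: "subsp S W \<Longrightarrow> f \<in> W \<Longrightarrow> g \<in> W \<Longrightarrow> (\<lambda>i. f i - g i) \<in> W"
proof -
  assume a: "subsp S W" "f \<in> W" "g \<in> W"
  have "(\<lambda>i. f i + (\<lambda>i. (-1) * g i) i) \<in> W" using a subsp_add subsp_scale by blast
  thus ?thesis by simp
qed
lemma subsp_lin: "subsp S W \<Longrightarrow> f \<in> W \<Longrightarrow> g \<in> W \<Longrightarrow> (\<lambda>i. f i + c * g i) \<in> W"
  using subsp_add[of S W f "\<lambda>i. c * g i"] subsp_scale by blast
lemma subsp_lin2: "subsp S W \<Longrightarrow> f \<in> W \<Longrightarrow> g \<in> W \<Longrightarrow> (\<lambda>i. f i - c * g i) \<in> W"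
  using subsp_diff[of S W f "\<lambda>i. c * g i"] subsp_scale by blast
lemma subsp_vecs: "subsp S W \<Longrightarrow> f \<in> W \<Longrightarrow> x \<notin> S \<Longrightarrow> f x = 0"
  by (auto simp: subsp_def vecs_on_def)

lemma proj_exists:
  assumes "finite T"
  shows "subsp T W \<Longrightarrow> \<exists>w\<in>W. \<forall>u\<in>W. inner_on T (\<lambda>i. v i - w i) u = 0"
  using assms
proof (induction T arbitrary: W v rule: finite_induct)
  case empty
  have "(\<lambda>_. 0) \<in> W" using empty by (simp add: subsp_def)
  thus ?case by (auto simp: inner_on_def)
next
  case (insert x T)
  define W0 where "W0 = {w\<in>W. w x = 0}"
  have sub0: "subsp T W0"
    using insert.prems unfolding subsp_def W0_def vecs_on_def by auto
  have "\<forall>v. \<exists>w\<in>W0. \<forall>u\<in>W0. inner_on T (\<lambda>i. v i - w i) u = 0" using insert.IH sub0 by blast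
  then obtain P0 where P0: "\<And>v. P0 v \<in> W0" "\<And>v u. u \<in> W0 \<Longrightarrow> inner_on T (\<lambda>i. v i - P0 v i) u = 0"
    by metis
  have split: "\<And>f g. inner_on (insert x T) f g = f x * g x + inner_on T f g"
    using insert.hyps by (simp add: inner_on_def)
  have W0_orth: "\<And>f u. u \<in> W0 \<Longrightarrow> inner_on (insert x T) f u = inner_on T f u"
    using split W0_def by simp
  show ?case
  proof (cases "\<forall>w\<in>W. w x = 0")
    case True
    then have "W0 = W" by (auto simp: W0_def)
    show ?thesis apply (rule bexI[of _ "P0 v"]) using P0 W0_orth \<open>W0 = W\<close> by auto
  next
    case False
    then obtain z where z: "z \<in> W" "z x \<noteq> 0" by auto
    define z' where "z' = (\<lambda>i. z i - P0 z i)"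
    have z'W: "z' \<in> W" unfolding z'_def using subsp_diff[OF insert.prems z(1)] P0(1)[of z] W0_def by auto
    have z'x: "z' x \<noteq> 0" using z P0(1)[of z] by (simp add: z'_def W0_def)
    have z'orth: "\<And>u. u\<in>W0 \<Longrightarrow> inner_on (insert x T) z' u = 0" using W0_orth P0(2) z'_def by simp
    define c where "c = inner_on (insert x T) z' z'"
    have "inner_on T z' z' \<ge> 0" unfolding inner_on_def by (rule sum_nonneg) simp
    moreover have "z' x * z' x > 0" using z'x by (simp add: zero_less_mult_iff) linarith
    ultimately have cpos: "c > 0" unfolding c_def split by linarith
    define r where "r = (\<lambda>i. v i - P0 v i)"
    define k where "k = inner_on (insert x T) r z' / c"
    define w where "w = (\<lambda>i. P0 v i + k * z' i)"
    have wW: "w \<in> W" unfolding w_def using subsp_lin[OF insert.prems _ z'W] P0(1)[of v] W0_def by auto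
    have "\<forall>u\<in>W. inner_on (insert x T) (\<lambda>i. v i - w i) u = 0"
    proof
      fix u assume u: "u\<in>W"
      define t where "t = u x / z' x"
      define u0 where "u0 = (\<lambda>i. u i - t * z' i)"
      have "u0 \<in> W" unfolding u0_def using subsp_lin2[OF insert.prems u z'W] .
      moreover have "u0 x = 0" using z'x by (simp add: u0_def t_def)
      ultimately have u0: "u0 \<in> W0" by (simp add: W0_def)
      have ueq: "u = (\<lambda>i. u0 i + t * z' i)" by (simp add: u0_def)
      have vw: "(\<lambda>i. v i - w i) = (\<lambda>i. r i - k * z' i)" by (simp add: w_def r_def algebra_simps)
      have 1: "inner_on (insert x T) r u0 = 0" using W0_orth[OF u0] P0(2)[OF u0] r_def by simp
      have 2: "inner_on (insert x T) z' u0 = 0" using z'orth u0 by simp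
      have 3: "inner_on (insert x T) r z' - k * c = 0" using cpos k_def by simp
      have exp: "\<And>S::'a set. inner_on S (\<lambda>i. r i - k * z' i) (\<lambda>i. u0 i + t * z' i)
          = inner_on S r u0 + t * inner_on S r z' - k * inner_on S z' u0 - k * t * inner_on S z' z'"
        unfolding inner_on_def
        by (simp add: algebra_simps sum.distrib sum_subtractf sum_distrib_left)
      show "inner_on (insert x T) (\<lambda>i. v i - w i) u = 0"
        unfolding vw using exp[of "insert x T"] 1 2 3 ueq c_def
        by (simp add: algebra_simps)
    qed
    thus ?thesis using wW by blast
  qed
qed

lemma proj_unique:
  assumes "subsp S W" "w1 \<in> W" "w2 \<in> W"
    "\<forall>u\<in>W. inner_on S (\<lambda>i. v i - w1 i) u = 0" "\<forall>u\<in>W. inner_on S (\<lambda>i. v i - w2 i) u = 0"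
    "finite S"
  shows "w1 = w2"
proof -
  define d where "d = (\<lambda>i. w1 i - w2 i)"
  have dW: "d \<in> W" using subsp_diff assms d_def by blast
  have "inner_on S (\<lambda>i. v i - w2 i) d - inner_on S (\<lambda>i. v i - w1 i) d = inner_on S d d"
    unfolding inner_on_def d_def by (simp add: algebra_simps sum_subtractf[symmetric])
  hence dd: "(\<Sum>i\<in>S. d i * d i) = 0" using assms(4,5) dW by (simp add: inner_on_def)
  have "\<forall>i\<in>S. d i * d i = 0"
    using sum_nonneg_eq_0_iff[of S "\<lambda>i. d i * d i"] dd assms(6) by simp
  hence "\<forall>i\<in>S. d i = 0" by simp
  moreover have "\<forall>i. i \<notin> S \<longrightarrow> d i = 0" using dW subsp_vecs[OF assms(1)] by blast
  ultimately have "\<forall>i. d i = 0" by blast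
  thus ?thesis by (auto simp: d_def)
qed

lemma orth_proj_props:
  assumes "finite S" "subsp S W"
  shows "orth_proj S W v \<in> W \<and> (\<forall>u\<in>W. inner_on S (\<lambda>i. v i - orth_proj S W v i) u = 0)"
proof -
  obtain w where w: "w \<in> W" "\<forall>u\<in>W. inner_on S (\<lambda>i. v i - w i) u = 0"
    using proj_exists[OF assms(1,2)] by blast
  have "orth_proj S W v = w" unfolding orth_proj_def
    apply (rule the_equality) using w apply blast
    using proj_unique[OF assms(2) _ w(1) _ w(2) assms(1)] by blast
  thus ?thesis using w by simp
qed

lemma orth_proj_eq:
  assumes "finite S" "subsp S W" "w \<in> W" "\<forall>u\<in>W. inner_on S (\<lambda>i. v i - w i) u = 0"
  shows "orth_proj S W v = w"
  using orth_proj_props[OF assms(1,2)] proj_unique[OF assms(2) _ assms(3) _ assms(4) assms(1)] by blast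


definition Nop :: "'v set \<Rightarrow> 'v set set \<Rightarrow> ('v set \<Rightarrow> real) \<Rightarrow> 'v \<Rightarrow> real" where
 "Nop V Ed f = (\<lambda>v. if v \<in> V then (\<Sum>e\<in>{e\<in>Ed. v\<in>e}. f e) else 0)"
definition NTop :: "'v set set \<Rightarrow> ('v \<Rightarrow> real) \<Rightarrow> 'v set \<Rightarrow> real" where
 "NTop Ed x = (\<lambda>e. if e \<in> Ed then (\<Sum>v\<in>e. x v) else 0)"

lemma sg_edge: "simple_graph V Ed \<Longrightarrow> e \<in> Ed \<Longrightarrow> \<exists>x y. x \<in> V \<and> y \<in> V \<and> x \<noteq> y \<and> e = {x, y}"
  by (simp add: simple_graph_def)
lemma sg_finV: "simple_graph V Ed \<Longrightarrow> finite V" by (simp add: simple_graph_def)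
lemma sg_sub: "simple_graph V Ed \<Longrightarrow> e \<in> Ed \<Longrightarrow> e \<subseteq> V" using sg_edge by fastforce
lemma sg_finE: "simple_graph V Ed \<Longrightarrow> finite Ed"
proof -
  assume a: "simple_graph V Ed"
  have "Ed \<subseteq> Pow V" using sg_sub[OF a] by blast
  thus ?thesis using sg_finV[OF a] finite_subset by blast
qed
lemma sg_fine: "simple_graph V Ed \<Longrightarrow> e \<in> Ed \<Longrightarrow> finite e" using sg_edge by fastforce

lemma Nop_vecs: "Nop V Ed f \<in> vecs_on V" by (simp add: Nop_def vecs_on_def)
lemma NTop_vecs: "NTop Ed x \<in> vecs_on Ed" by (simp add: NTop_def vecs_on_def)
lemma Nop_diff: "Nop V Ed (\<lambda>i. f i - g i) = (\<lambda>i. Nop V Ed f i - Nop V Ed g i)"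
  by (simp add: Nop_def sum_subtractf fun_eq_iff)
lemma Nop_scale: "Nop V Ed (\<lambda>i. c * f i) = (\<lambda>i. c * Nop V Ed f i)"
  by (simp add: Nop_def sum_distrib_left fun_eq_iff)
lemma NTop_scale: "NTop Ed (\<lambda>i. c * f i) = (\<lambda>i. c * NTop Ed f i)"
  by (simp add: NTop_def sum_distrib_left fun_eq_iff)

lemma adjoint:
  assumes g: "simple_graph V Ed"
  shows "inner_on V (Nop V Ed f) x = inner_on Ed f (NTop Ed x)"
proof -
  have "inner_on V (Nop V Ed f) x = (\<Sum>v\<in>V. \<Sum>e\<in>{e\<in>Ed. v\<in>e}. f e * x v)"
    by (simp add: inner_on_def Nop_def sum_distrib_right)
  also have "\<dots> = (\<Sum>e\<in>Ed. \<Sum>v\<in>{v\<in>V. v\<in>e}. f e * x v)"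
    by (rule sum.swap_restrict) (use sg_finV[OF g] sg_finE[OF g] in auto)
  also have "\<dots> = (\<Sum>e\<in>Ed. \<Sum>v\<in>e. f e * x v)"
  proof -
    have "\<And>e. e\<in>Ed \<Longrightarrow> {v\<in>V. v\<in>e} = e" using sg_sub[OF g] by blast
    thus ?thesis by simp
  qed
  also have "\<dots> = inner_on Ed f (NTop Ed x)"
    by (simp add: inner_on_def NTop_def sum_distrib_left)
  finally show ?thesis .
qed

lemma card_count:
  assumes "finite A" "finite U" "\<forall>e\<in>A. e \<subseteq> U"
  shows "(\<Sum>e\<in>A. \<Sum>u\<in>e. x u) = (\<Sum>u\<in>U. x u * real (card {e\<in>A. u \<in> e}))"
proof -
  have "(\<Sum>e\<in>A. \<Sum>u\<in>e. x u) = (\<Sum>e\<in>A. \<Sum>u\<in>U. if u \<in> e then x u else 0)"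
  proof (rule sum.cong, simp)
    fix e assume "e \<in> A"
    hence "e \<subseteq> U" using assms by auto
    hence "e = {u\<in>U. u\<in>e}" by auto
    hence "(\<Sum>u\<in>e. x u) = (\<Sum>u\<in>{u\<in>U. u\<in>e}. x u)" by simp
    also have "\<dots> = (\<Sum>u\<in>U. if u \<in> e then x u else 0)" using assms(2) by (rule sum.inter_filter)
    finally show "(\<Sum>u\<in>e. x u) = (\<Sum>u\<in>U. if u \<in> e then x u else 0)" .
  qed
  also have "\<dots> = (\<Sum>u\<in>U. \<Sum>e\<in>A. if u \<in> e then x u else 0)" by (rule sum.swap)
  also have "\<dots> = (\<Sum>u\<in>U. x u * real (card {e\<in>A. u \<in> e}))"
  proof (rule sum.cong, simp)
    fix u
    have "(\<Sum>e\<in>A. if u \<in> e then x u else 0) = (\<Sum>e\<in>{e\<in>A. u\<in>e}. x u)"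
      by (rule sum.inter_filter[symmetric]) (rule assms(1))
    thus "(\<Sum>e\<in>A. if u \<in> e then x u else 0) = x u * real (card {e\<in>A. u \<in> e})" by simp
  qed
  finally show ?thesis .
qed

lemma two_el: "e = {x,y} \<Longrightarrow> v\<in>e \<Longrightarrow> u\<in>e \<Longrightarrow> v\<noteq>u \<Longrightarrow> e={v,u}" by auto

lemma Q_eq:
  assumes g: "simple_graph V Ed" and x: "x \<in> vecs_on V"
  shows "mat_vec V (signless_laplacian Ed) x = Nop V Ed (NTop Ed x)"
proof
  fix v
  show "mat_vec V (signless_laplacian Ed) x v = Nop V Ed (NTop Ed x) v"
  proof (cases "v \<in> V")
    case False thus ?thesis by (simp add: mat_vec_def Nop_def)
  next
    case True
    have "Nop V Ed (NTop Ed x) v = (\<Sum>e\<in>{e\<in>Ed. v\<in>e}. \<Sum>u\<in>e. x u)"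
      using True by (simp add: Nop_def NTop_def)
    also have "\<dots> = (\<Sum>u\<in>V. x u * real (card {e\<in>{e\<in>Ed. v\<in>e}. u \<in> e}))"
      by (rule card_count) (use sg_finE[OF g] sg_finV[OF g] sg_sub[OF g] in auto)
    also have "\<dots> = (\<Sum>u\<in>V. signless_laplacian Ed v u * x u)"
    proof (rule sum.cong, simp)
      fix u assume u: "u \<in> V"
      have "real (card {e\<in>{e\<in>Ed. v\<in>e}. u \<in> e}) = signless_laplacian Ed v u"
      proof (cases "u = v")
        case True thus ?thesis by (simp add: signless_laplacian_def degree_def)
      next
        case False
        have "{e\<in>{e\<in>Ed. v\<in>e}. u \<in> e} = (if {v,u} \<in> Ed then {{v,u}} else {})"
        proof (cases "{v,u} \<in> Ed")
          case True
          have "\<And>e. e \<in> Ed \<Longrightarrow> v \<in> e \<Longrightarrow> u \<in> e \<Longrightarrow> e = {v,u}"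
          proof -
            fix e assume "e \<in> Ed" "v \<in> e" "u \<in> e"
            then obtain p q where "e = {p,q}" using sg_edge[OF g] by blast
            thus "e = {v,u}" using two_el \<open>v \<in> e\<close> \<open>u \<in> e\<close> False by blast
          qed
          hence "{e\<in>{e\<in>Ed. v\<in>e}. u \<in> e} = {{v,u}}" using True by blast
          thus ?thesis using True by simp
        next
          case F2: False
          have "\<And>e. e \<in> Ed \<Longrightarrow> v \<in> e \<Longrightarrow> u \<in> e \<Longrightarrow> e = {v,u}"
          proof -
            fix e assume "e \<in> Ed" "v \<in> e" "u \<in> e"
            then obtain p q where "e = {p,q}" using sg_edge[OF g] by blast
            thus "e = {v,u}" using two_el \<open>v \<in> e\<close> \<open>u \<in> e\<close> False by blast
          qed
          hence "{e\<in>{e\<in>Ed. v\<in>e}. u \<in> e} = {}" using F2 by blast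
          thus ?thesis using F2 by simp
        qed
        thus ?thesis using False by (simp add: signless_laplacian_def)
      qed
      thus "x u * real (card {e\<in>{e\<in>Ed. v\<in>e}. u \<in> e}) = signless_laplacian Ed v u * x u" by simp
    qed
    finally show ?thesis using True by (simp add: mat_vec_def)
  qed
qed

lemma card_int_edges:
  assumes "e = {a,b}" "a \<noteq> b" "e' = {c,d}" "c \<noteq> d"
  shows "real (card (e \<inter> e')) = line_adj Ed e e' + (if e' = e then 2 else 0)"
proof (cases "e' = e")
  case True thus ?thesis using assms by (simp add: line_adj_def)
next
  case False
  show ?thesis
  proof (cases "e \<inter> e' = {}")
    case True thus ?thesis using False by (simp add: line_adj_def)
  next
    case F2: False
    then obtain y where y: "y \<in> e \<inter> e'" by blast
    have "e \<inter> e' = {y}"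
    proof (rule ccontr)
      assume "e \<inter> e' \<noteq> {y}"
      then obtain z where z: "z \<in> e \<inter> e'" "z \<noteq> y" using y by blast
      have "e = {y,z}" using two_el[OF assms(1)] y z by blast
      moreover have "e' = {y,z}" using two_el[OF assms(3)] y z by blast
      ultimately show False using False by simp
    qed
    thus ?thesis using False F2 by (simp add: line_adj_def)
  qed
qed

lemma L_eq:
  assumes g: "simple_graph V Ed" and f: "f \<in> vecs_on Ed"
  shows "mat_vec Ed (line_adj Ed) f = (\<lambda>e. NTop Ed (Nop V Ed f) e - 2 * f e)"
proof
  fix e
  show "mat_vec Ed (line_adj Ed) f e = NTop Ed (Nop V Ed f) e - 2 * f e"
  proof (cases "e \<in> Ed")
    case False thus ?thesis using f by (simp add: mat_vec_def NTop_def vecs_on_def)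
  next
    case True
    have "NTop Ed (Nop V Ed f) e = (\<Sum>v\<in>e. \<Sum>e'\<in>{e'\<in>Ed. v\<in>e'}. f e')"
      using True sg_sub[OF g True] by (simp add: NTop_def Nop_def subset_iff)
    also have "\<dots> = (\<Sum>e'\<in>Ed. \<Sum>v\<in>{v\<in>e. v \<in> e'}. f e')"
      by (rule sum.swap_restrict) (use sg_finE[OF g] sg_fine[OF g True] in auto)
    also have "\<dots> = (\<Sum>e'\<in>Ed. f e' * real (card {v\<in>e. v \<in> e'}))"
      by (simp add: mult.commute)
    also have "\<dots> = (\<Sum>e'\<in>Ed. line_adj Ed e e' * f e' + (if e' = e then 2 * f e else 0))"
    proof (rule sum.cong, simp)
      fix e' assume e': "e' \<in> Ed"
      obtain a b where ab: "e = {a,b}" "a \<noteq> b" using sg_edge[OF g True] by blast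
      obtain c d where cd: "e' = {c,d}" "c \<noteq> d" using sg_edge[OF g e'] by blast
      have "{v\<in>e. v \<in> e'} = e \<inter> e'" by auto
      thus "f e' * real (card {v\<in>e. v \<in> e'}) = line_adj Ed e e' * f e' + (if e' = e then 2 * f e else 0)"
        using card_int_edges[OF ab cd, of Ed] by (simp add: algebra_simps)
    qed
    also have "\<dots> = (\<Sum>e'\<in>Ed. line_adj Ed e e' * f e') + 2 * f e"
      using True sg_finE[OF g] by (simp add: sum.distrib)
    finally show ?thesis using True by (simp add: mat_vec_def)
  qed
qed


lemma mat_vec_add: "mat_vec S M (\<lambda>i. f i + g i) = (\<lambda>i. mat_vec S M f i + mat_vec S M g i)"
  by (simp add: mat_vec_def algebra_simps sum.distrib fun_eq_iff)
lemma mat_vec_scale: "mat_vec S M (\<lambda>i. c * f i) = (\<lambda>i. c * mat_vec S M f i)"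
  by (simp add: mat_vec_def algebra_simps sum_distrib_left fun_eq_iff)

lemma eig_subsp: "subsp S (eigenspace_on S M \<theta>)"
  unfolding subsp_def eigenspace_on_def
  by (auto simp: vecs_on_def mat_vec_add mat_vec_scale algebra_simps) (simp add: mat_vec_def fun_eq_iff)

lemma memE:
  assumes g: "simple_graph V Ed"
  shows "x \<in> eigenspace_on V (signless_laplacian Ed) lam \<longleftrightarrow>
     x \<in> vecs_on V \<and> Nop V Ed (NTop Ed x) = (\<lambda>i. lam * x i)"
  using Q_eq[OF g] by (auto simp: eigenspace_on_def)

lemma memF:
  assumes g: "simple_graph V Ed"
  shows "f \<in> eigenspace_on Ed (line_adj Ed) (lam - 2) \<longleftrightarrow>
     f \<in> vecs_on Ed \<and> NTop Ed (Nop V Ed f) = (\<lambda>i. lam * f i)"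
proof -
  have "f \<in> vecs_on Ed \<Longrightarrow> ((\<lambda>e. NTop Ed (Nop V Ed f) e - 2 * f e) = (\<lambda>i. (lam - 2) * f i))
     \<longleftrightarrow> NTop Ed (Nop V Ed f) = (\<lambda>i. lam * f i)"
    by (auto simp: fun_eq_iff algebra_simps)
  thus ?thesis using L_eq[OF g] by (auto simp: eigenspace_on_def)
qed

lemma E_to_F:
  assumes g: "simple_graph V Ed" and x: "x \<in> eigenspace_on V (signless_laplacian Ed) lam"
  shows "NTop Ed x \<in> eigenspace_on Ed (line_adj Ed) (lam - 2)"
  using x unfolding memE[OF g] memF[OF g] by (simp add: NTop_vecs NTop_scale)

lemma key:
  assumes g: "simple_graph V Ed" and lam: "lam \<noteq> 0"
  shows "spectral_proj V (signless_laplacian Ed) lam (Nop V Ed p) = Nop V Ed (spectral_proj Ed (line_adj Ed) (lam - 2) p)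
   \<and> spectral_proj Ed (line_adj Ed) (lam - 2) p = (\<lambda>i. (1/lam) * NTop Ed (spectral_proj V (signless_laplacian Ed) lam (Nop V Ed p)) i)"
proof -
  define E where "E = eigenspace_on V (signless_laplacian Ed) lam"
  define F where "F = eigenspace_on Ed (line_adj Ed) (lam - 2)"
  define w where "w = spectral_proj Ed (line_adj Ed) (lam - 2) p"
  have fE: "finite Ed" using sg_finE[OF g] .
  have fV: "finite V" using sg_finV[OF g] .
  have wprops: "w \<in> F \<and> (\<forall>u\<in>F. inner_on Ed (\<lambda>i. p i - w i) u = 0)"
    unfolding w_def F_def spectral_proj_def by (rule orth_proj_props[OF fE eig_subsp])
  have wF: "NTop Ed (Nop V Ed w) = (\<lambda>i. lam * w i)" using wprops memF[OF g] F_def by blast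
  have NwE: "Nop V Ed w \<in> E" unfolding E_def memE[OF g]
    by (simp add: Nop_vecs wF Nop_scale)
  have orth: "\<forall>u\<in>E. inner_on V (\<lambda>i. Nop V Ed p i - Nop V Ed w i) u = 0"
  proof
    fix u assume "u \<in> E"
    hence "NTop Ed u \<in> F" using E_to_F[OF g] E_def F_def by blast
    hence "inner_on Ed (\<lambda>i. p i - w i) (NTop Ed u) = 0" using wprops by blast
    thus "inner_on V (\<lambda>i. Nop V Ed p i - Nop V Ed w i) u = 0"
      using adjoint[OF g, of "\<lambda>i. p i - w i" u] by (simp add: Nop_diff)
  qed
  have 1: "spectral_proj V (signless_laplacian Ed) lam (Nop V Ed p) = Nop V Ed w"
    unfolding spectral_proj_def using orth_proj_eq[OF fV eig_subsp NwE[unfolded E_def] orth[unfolded E_def]] .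
  have 2: "w = (\<lambda>i. (1/lam) * NTop Ed (Nop V Ed w) i)" using wF lam by (simp add: fun_eq_iff)
  show ?thesis using 1 2 w_def by simp
qed

lemma Nop_basis:
  assumes g: "simple_graph V Ed" and e: "{a,b} \<in> Ed"
  shows "Nop V Ed (std_basis {a,b}) = (\<lambda>i. std_basis a i + std_basis b i)"
proof
  fix v
  obtain x y where xy: "x \<in> V" "y \<in> V" "x \<noteq> y" "{a,b} = {x,y}" using sg_edge[OF g e] by blast
  have ab: "a \<noteq> b" "a \<in> V" "b \<in> V" using xy by (auto simp: doubleton_eq_iff)
  have fin: "finite {e\<in>Ed. v\<in>e}" using sg_finE[OF g] by simp
  have "(\<Sum>e\<in>{e\<in>Ed. v\<in>e}. std_basis {a,b} e) = (if {a,b} \<in> {e\<in>Ed. v\<in>e} then 1 else 0)"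
    unfolding std_basis_def using fin by (simp add: sum.delta')
  thus "Nop V Ed (std_basis {a,b}) v = std_basis a v + std_basis b v"
    using ab e by (auto simp: Nop_def std_basis_def)
qed

theorem mainTheorem12:
  fixes V :: "'v set" and Ed :: "'v set set" and a b \<alpha> \<beta> :: 'v and lam :: real
  assumes "simple_graph V Ed"
    and "{a, b} \<in> Ed" and "{\<alpha>, \<beta>} \<in> Ed"
    and "is_eigenvalue_on V (signless_laplacian Ed) lam" and "lam \<noteq> 0"
  shows "is_eigenvalue_on Ed (line_adj Ed) (lam - 2) \<and>
    (\<forall>s \<in> {1, -1 :: real}.
      (spectral_proj Ed (line_adj Ed) (lam - 2) (std_basis {a, b})
         = (\<lambda>i. s * spectral_proj Ed (line_adj Ed) (lam - 2) (std_basis {\<alpha>, \<beta>}) i))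
      \<longleftrightarrow>
      (spectral_proj V (signless_laplacian Ed) lam (\<lambda>i. std_basis a i + std_basis b i)
         = (\<lambda>i. s * spectral_proj V (signless_laplacian Ed) lam (\<lambda>i. std_basis \<alpha> i + std_basis \<beta> i) i)))"
proof
  note g = assms(1)
  show "is_eigenvalue_on Ed (line_adj Ed) (lam - 2)"
  proof -
    obtain x where x: "x \<in> eigenspace_on V (signless_laplacian Ed) lam" "x \<noteq> (\<lambda>_. 0)"
      using assms(4) by (auto simp: is_eigenvalue_on_def)
    have "NTop Ed x \<noteq> (\<lambda>_. 0)"
    proof
      assume 0: "NTop Ed x = (\<lambda>_. 0)"
      have "Nop V Ed (NTop Ed x) = (\<lambda>i. lam * x i)" using x(1) memE[OF g] by blast
      moreover have "Nop V Ed (\<lambda>_. 0) = (\<lambda>_. 0)" by (simp add: Nop_def fun_eq_iff)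
      ultimately have "(\<lambda>i. lam * x i) = (\<lambda>_. 0)" using 0 by simp
      hence "x = (\<lambda>_. 0)" using assms(5) by (simp add: fun_eq_iff)
      thus False using x(2) by simp
    qed
    thus ?thesis using E_to_F[OF g x(1)] by (auto simp: is_eigenvalue_on_def)
  qed
next
  note g = assms(1)
  define PE where "PE = spectral_proj V (signless_laplacian Ed) lam"
  define PF where "PF = spectral_proj Ed (line_adj Ed) (lam - 2)"
  define p where "p = std_basis {a,b}"
  define q where "q = std_basis {\<alpha>,\<beta>}"
  have Np: "Nop V Ed p = (\<lambda>i. std_basis a i + std_basis b i)" using Nop_basis[OF g assms(2)] p_def by simp
  have Nq: "Nop V Ed q = (\<lambda>i. std_basis \<alpha> i + std_basis \<beta> i)" using Nop_basis[OF g assms(3)] q_def by simp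
  have kpc: "PE (Nop V Ed p) = Nop V Ed (PF p) \<and> PF p = (\<lambda>i. (1/lam) * NTop Ed (PE (Nop V Ed p)) i)"
    unfolding PE_def PF_def by (rule key[OF g assms(5)])
  note kp = conjunct1[OF kpc] conjunct2[OF kpc]
  have kqc: "PE (Nop V Ed q) = Nop V Ed (PF q) \<and> PF q = (\<lambda>i. (1/lam) * NTop Ed (PE (Nop V Ed q)) i)"
    unfolding PE_def PF_def by (rule key[OF g assms(5)])
  note kq = conjunct1[OF kqc] conjunct2[OF kqc]
  have main: "\<And>s. (PF p = (\<lambda>i. s * PF q i)) \<longleftrightarrow> (PE (Nop V Ed p) = (\<lambda>i. s * PE (Nop V Ed q) i))"
  proof
    fix s assume "PF p = (\<lambda>i. s * PF q i)"
    thus "PE (Nop V Ed p) = (\<lambda>i. s * PE (Nop V Ed q) i)" using kp(1) kq(1) by (simp add: Nop_scale)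
  next
    fix s assume h: "PE (Nop V Ed p) = (\<lambda>i. s * PE (Nop V Ed q) i)"
    have "PF p = (\<lambda>i. (1/lam) * NTop Ed (\<lambda>i. s * PE (Nop V Ed q) i) i)" using kp(2) h by simp
    also have "\<dots> = (\<lambda>i. s * PF q i)" by (subst kq(2)) (simp add: NTop_scale)
    finally show "PF p = (\<lambda>i. s * PF q i)" .
  qed
  show "\<forall>s \<in> {1, -1 :: real}.
      (spectral_proj Ed (line_adj Ed) (lam - 2) (std_basis {a, b})
         = (\<lambda>i. s * spectral_proj Ed (line_adj Ed) (lam - 2) (std_basis {\<alpha>, \<beta>}) i))
      \<longleftrightarrow>
      (spectral_proj V (signless_laplacian Ed) lam (\<lambda>i. std_basis a i + std_basis b i)
         = (\<lambda>i. s * spectral_proj V (signless_laplacian Ed) lam (\<lambda>i. std_basis \<alpha> i + std_basis \<beta> i) i))"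
    using main[unfolded Np Nq, unfolded PE_def PF_def p_def q_def] by blast
qed

end
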